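(* For a restless bandit and a family $\mathcal F\subseteq 2^{N^{\{0,1\}}}$ as in the context, the following are equivalent: (1) $w^S_j>0$ for all $S\in\mathcal F$ and $j\in N^{\{0,1\}}$; (2) for all $S\in\mathcal F$, $b^S_j<b^{S\cup\{j\}}_j$ for every $j\in N^{\{0,1\}}\setminus S$, and $b^S_j>b^{S\setminus\{j\}}_j$ for every $j\in S$.
   Context: Restless bandit: finite state space $N=N^{\{0,1\}}\cup N^{\{1\}}$ (disjoint); actions $a\in\{0,1\}$; transition probabilities $p^a_{ij}$ with $p^1_{ij}=p^0_{ij}$ for $i\in N^{\{1\}}$; discount factor $\beta\in(0,1)$; activity weights $\theta^1_j>0$. For $S\subseteq N^{\{0,1\}}$ the $S$-active policy is active on $S\cup N^{\{1\}}$ and passive on $N^{\{0,1\}}\setminus S$; $b^S_i=E_i[\sum_{t\ge0}\theta^1_{X(t)}a(t)\beta^t]$ under it, from $X(0)=i$. Marginal workloads: $w^S_i=\theta^1_i1\{i\in N^{\{0,1\}}\}+\beta\sum_{j\in N}(p^1_{ij}-p^0_{ij})b^S_j$. $\mathcal F$ is a family of subsets of $N^{\{0,1\}}$. *)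

theory Defs
  imports Complex_Main
begin

text \<open>Actions are encoded as bool: True = active (a = 1), False = passive (a = 0).
  p a i j is the one-step transition probability from i to j under action a.\<close>

definition act :: "'a set \<Rightarrow> 'a set \<Rightarrow> 'a \<Rightarrow> bool" where
  "act N1 S i \<longleftrightarrow> i \<in> S \<union> N1"

fun ptrans :: "'a set \<Rightarrow> 'a set \<Rightarrow> (bool \<Rightarrow> 'a \<Rightarrow> 'a \<Rightarrow> real) \<Rightarrow> 'a set
                 \<Rightarrow> nat \<Rightarrow> 'a \<Rightarrow> 'a \<Rightarrow> real" where
  "ptrans N N1 p S 0 i j = (if i = j then 1 else 0)"
| "ptrans N N1 p S (Suc t) i j = (\<Sum>k\<in>N. ptrans N N1 p S t i k * p (act N1 S k) k j)"

text \<open>b^S_i = E_i[ sum_t theta_{X(t)} a(t) beta^t ] under the S-active policy,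
  written out via the t-step transition probabilities (linearity of expectation).\<close>
definition bwork :: "'a set \<Rightarrow> 'a set \<Rightarrow> (bool \<Rightarrow> 'a \<Rightarrow> 'a \<Rightarrow> real) \<Rightarrow> real
                 \<Rightarrow> ('a \<Rightarrow> real) \<Rightarrow> 'a set \<Rightarrow> 'a \<Rightarrow> real" where
  "bwork N N1 p \<beta> \<theta> S i =
     (\<Sum>t. \<beta> ^ t * (\<Sum>j\<in>N. ptrans N N1 p S t i j * \<theta> j * (if act N1 S j then 1 else 0)))"

definition mwork :: "'a set \<Rightarrow> 'a set \<Rightarrow> 'a set \<Rightarrow> (bool \<Rightarrow> 'a \<Rightarrow> 'a \<Rightarrow> real) \<Rightarrow> real
                 \<Rightarrow> ('a \<Rightarrow> real) \<Rightarrow> 'a set \<Rightarrow> 'a \<Rightarrow> real" where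
  "mwork N N01 N1 p \<beta> \<theta> S i =
     \<theta> i * (if i \<in> N01 then 1 else 0)
     + \<beta> * (\<Sum>j\<in>N. (p True i j - p False i j) * bwork N N1 p \<beta> \<theta> S j)"

end

theory Submission
  imports Defs
begin


lemma ifmul: "(if P then 1 else 0) * (x::real) = (if P then x else 0)"
  "x * (if P then 1 else 0) = (if P then x else 0)" by simp_all

lemma pt_nonneg:
  assumes "finite N" "\<And>a i j. i \<in> N \<Longrightarrow> j \<in> N \<Longrightarrow> p a i j \<ge> 0" "j \<in> N"
  shows "ptrans N N1 p S t i j \<ge> 0"
  using assms(3)
proof (induction t arbitrary: j)
  case 0 then show ?case by simp
next
  case (Suc t) then show ?case by (simp add: assms(2) sum_nonneg)
qed

lemma pt_rowsum:
  assumes "finite N" "\<And>a i. i \<in> N \<Longrightarrow> (\<Sum>j\<in>N. p a i j) = 1" "i \<in> N"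
  shows "(\<Sum>j\<in>N. ptrans N N1 p S t i j) = 1"
proof (induction t)
  case 0 then show ?case using assms by (simp add: sum.delta)
next
  case (Suc t)
  have "(\<Sum>j\<in>N. ptrans N N1 p S (Suc t) i j)
      = (\<Sum>k\<in>N. ptrans N N1 p S t i k * (\<Sum>j\<in>N. p (act N1 S k) k j))"
    by (simp only: ptrans.simps sum_distrib_left sum.swap[of "\<lambda>j k. ptrans N N1 p S t i k * p (act N1 S k) k j" N N])
  also have "\<dots> = (\<Sum>k\<in>N. ptrans N N1 p S t i k)"
    by (rule sum.cong) (auto simp: assms(2))
  finally show ?case using Suc by simp
qed

lemma pt_le1:
  assumes "finite N" "\<And>a i j. i \<in> N \<Longrightarrow> j \<in> N \<Longrightarrow> p a i j \<ge> 0"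
    "\<And>a i. i \<in> N \<Longrightarrow> (\<Sum>j\<in>N. p a i j) = 1" "i \<in> N" "j \<in> N"
  shows "ptrans N N1 p S t i j \<le> 1"
proof -
  have "ptrans N N1 p S t i j \<le> (\<Sum>j\<in>N. ptrans N N1 p S t i j)"
    by (rule member_le_sum) (auto intro: pt_nonneg[OF assms(1,2)] simp: assms)
  then show ?thesis using pt_rowsum[OF assms(1,3,4)] by simp
qed

lemma pt_left:
  assumes "finite N" "i \<in> N" "j \<in> N"
  shows "ptrans N N1 p S (Suc t) i j = (\<Sum>k\<in>N. p (act N1 S i) i k * ptrans N N1 p S t k j)"
  using assms(3)
proof (induction t arbitrary: j)
  case 0 then show ?case using assms by (simp add: ifmul sum.delta sum.delta')
next
  case (Suc t)
  have "ptrans N N1 p S (Suc (Suc t)) i j = (\<Sum>k\<in>N. ptrans N N1 p S (Suc t) i k * p (act N1 S k) k j)"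
    by simp
  also have "\<dots> = (\<Sum>k\<in>N. (\<Sum>l\<in>N. p (act N1 S i) i l * ptrans N N1 p S t l k) * p (act N1 S k) k j)"
    by (rule sum.cong) (use Suc in auto)
  also have "\<dots> = (\<Sum>l\<in>N. p (act N1 S i) i l * ptrans N N1 p S (Suc t) l j)"
    by (simp only: ptrans.simps sum_distrib_left sum_distrib_right mult.assoc
          sum.swap[of "\<lambda>k l. p (act N1 S i) i l * (ptrans N N1 p S t l k * p (act N1 S k) k j)" N N])
  finally show ?case .
qed

lemma bellman:
  assumes finN: "finite N"
    and p_nonneg: "\<And>a i j. i \<in> N \<Longrightarrow> j \<in> N \<Longrightarrow> p a i j \<ge> 0"
    and p_stoch: "\<And>a i. i \<in> N \<Longrightarrow> (\<Sum>j\<in>N. p a i j) = 1"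
    and beta: "0 < \<beta>" "\<beta> < 1"
    and theta_pos: "\<And>j. j \<in> N \<Longrightarrow> \<theta> j > 0"
    and i: "i \<in> N"
  shows "bwork N M p \<beta> \<theta> S i = \<theta> i * (if act M S i then 1 else 0)
     + \<beta> * (\<Sum>k\<in>N. p (act M S i) i k * bwork N M p \<beta> \<theta> S k)"
proof -
  define r where "r j = \<theta> j * (if act M S j then 1 else (0::real))" for j
  define f where "f t i = \<beta> ^ t * (\<Sum>j\<in>N. ptrans N M p S t i j * r j)" for t i
  have b: "bwork N M p \<beta> \<theta> S i = suminf (\<lambda>t. f t i)" for i
    unfolding bwork_def f_def r_def by (simp add: mult.assoc)
  define R where "R = (\<Sum>j\<in>N. r j)"
  have rnn: "j \<in> N \<Longrightarrow> r j \<ge> 0" for j using theta_pos[of j] by (simp add: r_def)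
  have summ: "summable (\<lambda>t. f t i)" if "i \<in> N" for i
  proof (rule summable_comparison_test')
    show "summable (\<lambda>t. R * \<beta> ^ t)" using beta by (simp add: summable_geometric)
    fix t
    have "0 \<le> (\<Sum>j\<in>N. ptrans N M p S t i j * r j)"
      by (intro sum_nonneg mult_nonneg_nonneg rnn pt_nonneg[OF finN p_nonneg]) auto
    moreover have "(\<Sum>j\<in>N. ptrans N M p S t i j * r j) \<le> R"
      unfolding R_def
      by (intro sum_mono mult_left_le_one_le rnn pt_nonneg[OF finN p_nonneg]
          pt_le1[OF finN p_nonneg p_stoch that]) auto
    ultimately show "norm (f t i) \<le> R * \<beta> ^ t"
      unfolding f_def using beta
      by (simp add: abs_mult mult.commute mult_left_mono)
  qed
  have "suminf (\<lambda>t. f t i) = (\<Sum>t. f (Suc t) i) + f 0 i"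
    using suminf_split_head[OF summ[OF i]] by simp
  moreover have "f 0 i = r i" using i finN by (simp add: f_def ifmul sum.delta sum.delta')
  moreover have "f (Suc t) i = \<beta> * (\<Sum>k\<in>N. p (act M S i) i k * f t k)" for t
  proof -
    have "f (Suc t) i = \<beta> * \<beta> ^ t * (\<Sum>j\<in>N. (\<Sum>k\<in>N. p (act M S i) i k * ptrans N M p S t k j) * r j)"
    proof -
      have e: "(\<Sum>j\<in>N. ptrans N M p S (Suc t) i j * r j) = (\<Sum>j\<in>N. (\<Sum>k\<in>N. p (act M S i) i k * ptrans N M p S t k j) * r j)"
        by (rule sum.cong[OF refl]) (simp only: pt_left[OF finN i])
      show ?thesis unfolding f_def power_Suc e by (simp only: mult.assoc)
    qed
    also have "\<dots> = \<beta> * (\<Sum>k\<in>N. p (act M S i) i k * f t k)"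
    proof -
      have "(\<Sum>j\<in>N. (\<Sum>k\<in>N. p (act M S i) i k * ptrans N M p S t k j) * r j)
          = (\<Sum>j\<in>N. \<Sum>k\<in>N. p (act M S i) i k * (ptrans N M p S t k j * r j))"
        by (simp only: sum_distrib_right mult.assoc)
      also have "\<dots> = (\<Sum>k\<in>N. \<Sum>j\<in>N. p (act M S i) i k * (ptrans N M p S t k j * r j))"
        by (rule sum.swap)
      also have "\<dots> = (\<Sum>k\<in>N. p (act M S i) i k * (\<Sum>j\<in>N. ptrans N M p S t k j * r j))"
        by (simp only: sum_distrib_left)
      finally have e: "(\<Sum>j\<in>N. (\<Sum>k\<in>N. p (act M S i) i k * ptrans N M p S t k j) * r j)
          = (\<Sum>k\<in>N. p (act M S i) i k * (\<Sum>j\<in>N. ptrans N M p S t k j * r j))" .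
      show ?thesis unfolding f_def e
        by (simp add: sum_distrib_left mult_ac)
    qed
    finally show ?thesis .
  qed
  moreover have "(\<Sum>t. \<beta> * (\<Sum>k\<in>N. p (act M S i) i k * f t k))
      = \<beta> * (\<Sum>k\<in>N. p (act M S i) i k * suminf (\<lambda>t. f t k))"
  proof -
    have "(\<Sum>t. (\<Sum>k\<in>N. p (act M S i) i k * f t k)) = (\<Sum>k\<in>N. (\<Sum>t. p (act M S i) i k * f t k))"
      by (rule suminf_sum) (intro summable_mult summ, simp)
    also have "\<dots> = (\<Sum>k\<in>N. p (act M S i) i k * suminf (\<lambda>t. f t k))"
      by (rule sum.cong[OF refl], rule suminf_mult, rule summ, simp)
    finally have X: "(\<Sum>t. (\<Sum>k\<in>N. p (act M S i) i k * f t k)) = (\<Sum>k\<in>N. p (act M S i) i k * suminf (\<lambda>t. f t k))" .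
    have sg: "summable (\<lambda>t. \<Sum>k\<in>N. p (act M S i) i k * f t k)"
      by (rule summable_sum, rule summable_mult, rule summ, simp)
    show ?thesis using suminf_mult[OF sg, of \<beta>] X by simp
  qed
  ultimately show ?thesis using b by (simp add: r_def)
qed

lemma sign_lemma:
  fixes d :: "'a \<Rightarrow> real"
  assumes finN: "finite N" and j: "j \<in> N"
    and Qn: "\<And>i k. i \<in> N \<Longrightarrow> k \<in> N \<Longrightarrow> Q i k \<ge> 0"
    and Qs: "\<And>i. i \<in> N \<Longrightarrow> (\<Sum>k\<in>N. Q i k) = 1"
    and beta: "0 < \<beta>" "\<beta> < 1"
    and eq: "\<And>i. i \<in> N \<Longrightarrow> d i = (if i = j then c else 0) + \<beta> * (\<Sum>k\<in>N. Q i k * d k)"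
    and c: "c \<ge> 0"
  shows "d j \<ge> c"
proof -
  define m where "m = Min (d ` N)"
  have ne: "N \<noteq> {}" using j by auto
  have "m \<in> d ` N" unfolding m_def using finN ne by (intro Min_in) auto
  then obtain k0 where k0: "k0 \<in> N" "d k0 = m" by auto
  have mle: "k \<in> N \<Longrightarrow> m \<le> d k" for k unfolding m_def using finN by simp
  have lb: "(\<Sum>k\<in>N. Q i k * d k) \<ge> m" if "i \<in> N" for i
  proof -
    have "(\<Sum>k\<in>N. Q i k * d k) \<ge> (\<Sum>k\<in>N. Q i k * m)"
      by (intro sum_mono mult_left_mono mle Qn that) auto
    also have "(\<Sum>k\<in>N. Q i k * m) = m" using Qs[OF that] by (simp add: sum_distrib_right[symmetric])
    finally show ?thesis .
  qed
  have "m \<ge> \<beta> * m"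
  proof -
    have "d k0 \<ge> \<beta> * (\<Sum>k\<in>N. Q k0 k * d k)" using eq[OF k0(1)] c by auto
    moreover have "\<beta> * (\<Sum>k\<in>N. Q k0 k * d k) \<ge> \<beta> * m"
      using lb[OF k0(1)] beta by (simp add: mult_left_mono)
    ultimately show ?thesis using k0 by linarith
  qed
  then have "(1 - \<beta>) * m \<ge> 0" by (simp add: algebra_simps)
  then have m0: "m \<ge> 0" using beta by (simp add: zero_le_mult_iff)
  have "\<beta> * (\<Sum>k\<in>N. Q j k * d k) \<ge> 0"
    using lb[OF j] m0 beta by simp
  then show ?thesis using eq[OF j] by simp
qed

lemma sign_iff:
  fixes d :: "'a \<Rightarrow> real"
  assumes finN: "finite N" and j: "j \<in> N"
    and Qn: "\<And>i k. i \<in> N \<Longrightarrow> k \<in> N \<Longrightarrow> Q i k \<ge> 0"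
    and Qs: "\<And>i. i \<in> N \<Longrightarrow> (\<Sum>k\<in>N. Q i k) = 1"
    and beta: "0 < \<beta>" "\<beta> < 1"
    and eq: "\<And>i. i \<in> N \<Longrightarrow> d i = (if i = j then c else 0) + \<beta> * (\<Sum>k\<in>N. Q i k * d k)"
  shows "d j > 0 \<longleftrightarrow> c > 0"
proof
  assume "c > 0"
  then have "c \<le> d j" using sign_lemma[OF finN j Qn Qs beta eq] by simp
  then show "d j > 0" using \<open>c > 0\<close> by linarith
next
  assume dj: "d j > 0"
  show "c > 0"
  proof (rule ccontr)
    assume "\<not> c > 0"
    then have nc: "-c \<ge> 0" by simp
    have neg: "- d i = (if i = j then -c else 0) + \<beta> * (\<Sum>k\<in>N. Q i k * - d k)" if "i \<in> N" for i
    proof -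
      note e = eq[OF that]
      show ?thesis by (subst e) (simp add: sum_negf)
    qed
    have "- d j \<ge> - c" by (rule sign_lemma[where d="\<lambda>i. - d i" and c="-c", OF finN j Qn Qs beta neg nc])
    then show False using dj \<open>-c \<ge> 0\<close> by linarith
  qed
qed



lemma diff_eq:
  assumes finN: "finite N"
    and p_nonneg: "\<And>a i j. i \<in> N \<Longrightarrow> j \<in> N \<Longrightarrow> p a i j \<ge> 0"
    and p_stoch: "\<And>a i. i \<in> N \<Longrightarrow> (\<Sum>j\<in>N. p a i j) = 1"
    and beta: "0 < \<beta>" "\<beta> < 1"
    and theta_pos: "\<And>j. j \<in> N \<Longrightarrow> \<theta> j > 0"
    and agree: "\<And>i. i \<noteq> j \<Longrightarrow> act N1 U i = act N1 V i"
    and i: "i \<in> N"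
  shows "bwork N N1 p \<beta> \<theta> U i - bwork N N1 p \<beta> \<theta> V i =
    (if i = j then \<theta> j * ((if act N1 U j then 1 else 0) - (if act N1 V j then 1 else 0))
       + \<beta> * (\<Sum>k\<in>N. (p (act N1 U j) j k - p (act N1 V j) j k) * bwork N N1 p \<beta> \<theta> V k) else 0)
    + \<beta> * (\<Sum>k\<in>N. p (act N1 U i) i k * (bwork N N1 p \<beta> \<theta> U k - bwork N N1 p \<beta> \<theta> V k))"
proof -
  note bU = bellman[OF finN p_nonneg p_stoch beta theta_pos i, where M=N1 and S=U]
  note bV = bellman[OF finN p_nonneg p_stoch beta theta_pos i, where M=N1 and S=V]
  define pU where "pU k = p (act N1 U i) i k" for k
  define pV where "pV k = p (act N1 V i) i k" for k
  define BU where "BU k = bwork N N1 p \<beta> \<theta> U k" for k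
  define BV where "BV k = bwork N N1 p \<beta> \<theta> V k" for k
  have h1: "(\<Sum>k\<in>N. (pU k - pV k) * BV k) = (\<Sum>k\<in>N. pU k * BV k) - (\<Sum>k\<in>N. pV k * BV k)"
    by (simp add: sum_subtractf left_diff_distrib)
  have h2: "(\<Sum>k\<in>N. pU k * (BU k - BV k)) = (\<Sum>k\<in>N. pU k * BU k) - (\<Sum>k\<in>N. pU k * BV k)"
    by (simp add: sum_subtractf right_diff_distrib)
  show ?thesis
  proof (cases "i = j")
    case True
    have "BU i - BV i = (\<theta> i * ((if act N1 U i then 1 else 0) - (if act N1 V i then 1 else 0))
       + \<beta> * (\<Sum>k\<in>N. (pU k - pV k) * BV k))
       + \<beta> * (\<Sum>k\<in>N. pU k * (BU k - BV k))"
      unfolding h1 h2 using bU bV unfolding pU_def pV_def BU_def BV_def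
      by (simp only: right_diff_distrib; linarith)
    then show ?thesis using True unfolding pU_def pV_def BU_def BV_def by simp
  next
    case False
    have "BU i - BV i = \<beta> * (\<Sum>k\<in>N. pU k * (BU k - BV k))"
      unfolding h2 using bU bV agree[OF False] unfolding pU_def pV_def BU_def BV_def
      by (simp only: right_diff_distrib; linarith)
    then show ?thesis using False unfolding pU_def pV_def BU_def BV_def by simp
  qed
qed

lemma key1:
  assumes finN: "finite N"
    and partN: "N = N01 \<union> N1" and disj: "N01 \<inter> N1 = {}"
    and p_nonneg: "\<And>a i j. i \<in> N \<Longrightarrow> j \<in> N \<Longrightarrow> p a i j \<ge> 0"
    and p_stoch: "\<And>a i. i \<in> N \<Longrightarrow> (\<Sum>j\<in>N. p a i j) = 1"
    and beta: "0 < \<beta>" "\<beta> < 1"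
    and theta_pos: "\<And>j. j \<in> N \<Longrightarrow> \<theta> j > 0"
    and S: "S \<subseteq> N01" and j: "j \<in> N01" "j \<notin> S"
  shows "bwork N N1 p \<beta> \<theta> S j < bwork N N1 p \<beta> \<theta> (S \<union> {j}) j
     \<longleftrightarrow> mwork N N01 N1 p \<beta> \<theta> S j > 0"
proof -
  define T where "T = S \<union> {j}"
  have jN: "j \<in> N" using j partN by auto
  have jN1: "j \<notin> N1" using j disj by auto
  have aT: "act N1 T j" unfolding T_def act_def by auto
  have aS: "\<not> act N1 S j" unfolding act_def using j jN1 by auto
  have agree: "\<And>i. i \<noteq> j \<Longrightarrow> act N1 T i = act N1 S i" unfolding T_def act_def by auto
  define d where "d i = bwork N N1 p \<beta> \<theta> T i - bwork N N1 p \<beta> \<theta> S i" for i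
  have eq: "d i = (if i = j then mwork N N01 N1 p \<beta> \<theta> S j else 0)
      + \<beta> * (\<Sum>k\<in>N. p (act N1 T i) i k * d k)" if "i \<in> N" for i
    using diff_eq[OF finN p_nonneg p_stoch beta theta_pos agree that] aT aS j(1)
    unfolding d_def mwork_def by simp
  have "d j > 0 \<longleftrightarrow> mwork N N01 N1 p \<beta> \<theta> S j > 0"
    by (rule sign_iff[OF finN jN _ _ beta eq]) (auto intro: p_nonneg p_stoch)
  then show ?thesis unfolding d_def T_def by linarith
qed

lemma key2:
  assumes finN: "finite N"
    and partN: "N = N01 \<union> N1" and disj: "N01 \<inter> N1 = {}"
    and p_nonneg: "\<And>a i j. i \<in> N \<Longrightarrow> j \<in> N \<Longrightarrow> p a i j \<ge> 0"
    and p_stoch: "\<And>a i. i \<in> N \<Longrightarrow> (\<Sum>j\<in>N. p a i j) = 1"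
    and beta: "0 < \<beta>" "\<beta> < 1"
    and theta_pos: "\<And>j. j \<in> N \<Longrightarrow> \<theta> j > 0"
    and S: "S \<subseteq> N01" and j: "j \<in> S"
  shows "bwork N N1 p \<beta> \<theta> S j > bwork N N1 p \<beta> \<theta> (S - {j}) j
     \<longleftrightarrow> mwork N N01 N1 p \<beta> \<theta> S j > 0"
proof -
  define T where "T = S - {j}"
  have jN01: "j \<in> N01" using j S by auto
  have jN: "j \<in> N" using jN01 partN by auto
  have jN1: "j \<notin> N1" using jN01 disj by auto
  have aT: "\<not> act N1 T j" unfolding T_def act_def using jN1 by auto
  have aS: "act N1 S j" unfolding act_def using j by auto
  have agree: "\<And>i. i \<noteq> j \<Longrightarrow> act N1 T i = act N1 S i" unfolding T_def act_def by auto
  define b where "b U i = bwork N N1 p \<beta> \<theta> U i" for U i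
  define d where "d i = b S i - b T i" for i
  have neg: "(\<Sum>k\<in>N. (p False j k - p True j k) * b S k) = - (\<Sum>k\<in>N. (p True j k - p False j k) * b S k)"
    unfolding sum_negf[symmetric] by (rule sum.cong) (simp_all add: algebra_simps)
  have eq: "d i = (if i = j then mwork N N01 N1 p \<beta> \<theta> S j else 0)
      + \<beta> * (\<Sum>k\<in>N. p (act N1 T i) i k * d k)" if "i \<in> N" for i
  proof -
    have E: "b T i - b S i = (if i = j then \<theta> j * (0 - 1) + \<beta> * (\<Sum>k\<in>N. (p False j k - p True j k) * b S k) else 0)
      + \<beta> * (\<Sum>k\<in>N. p (act N1 T i) i k * (b T k - b S k))"
      using diff_eq[OF finN p_nonneg p_stoch beta theta_pos agree that] aT aS
      unfolding b_def by simp
    have E2: "(\<Sum>k\<in>N. p (act N1 T i) i k * d k) = - (\<Sum>k\<in>N. p (act N1 T i) i k * (b T k - b S k))"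
      unfolding d_def sum_negf[symmetric] by (rule sum.cong) (simp_all add: algebra_simps)
    have "d i = - (b T i - b S i)" unfolding d_def by simp
    also have "\<dots> = (if i = j then mwork N N01 N1 p \<beta> \<theta> S j else 0)
      + \<beta> * (\<Sum>k\<in>N. p (act N1 T i) i k * d k)"
      unfolding E E2 neg using jN01 by (simp add: mwork_def b_def)
    finally show ?thesis .
  qed
  have "d j > 0 \<longleftrightarrow> mwork N N01 N1 p \<beta> \<theta> S j > 0"
    by (rule sign_iff[OF finN jN _ _ beta eq]) (auto intro: p_nonneg p_stoch)
  then show ?thesis unfolding d_def T_def b_def by linarith
qed


theorem proposition5:
  fixes N N01 N1 :: "'a set"
    and p :: "bool \<Rightarrow> 'a \<Rightarrow> 'a \<Rightarrow> real"
    and \<beta> :: real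
    and \<theta> :: "'a \<Rightarrow> real"
    and F :: "'a set set"
  assumes finN: "finite N"
    and partN: "N = N01 \<union> N1" and disj: "N01 \<inter> N1 = {}"
    and p_nonneg: "\<And>a i j. i \<in> N \<Longrightarrow> j \<in> N \<Longrightarrow> p a i j \<ge> 0"
    and p_stoch: "\<And>a i. i \<in> N \<Longrightarrow> (\<Sum>j\<in>N. p a i j) = 1"
    and p_N1: "\<And>i j. i \<in> N1 \<Longrightarrow> j \<in> N \<Longrightarrow> p True i j = p False i j"
    and beta: "0 < \<beta>" "\<beta> < 1"
    and theta_pos: "\<And>j. j \<in> N \<Longrightarrow> \<theta> j > 0"
    and F_sub: "\<And>S. S \<in> F \<Longrightarrow> S \<subseteq> N01"
  shows "(\<forall>S\<in>F. \<forall>j\<in>N01. mwork N N01 N1 p \<beta> \<theta> S j > 0)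
     \<longleftrightarrow> (\<forall>S\<in>F. (\<forall>j\<in>N01 - S. bwork N N1 p \<beta> \<theta> S j < bwork N N1 p \<beta> \<theta> (S \<union> {j}) j)
                 \<and> (\<forall>j\<in>S. bwork N N1 p \<beta> \<theta> S j > bwork N N1 p \<beta> \<theta> (S - {j}) j))"
proof -
  have K1: "bwork N N1 p \<beta> \<theta> S j < bwork N N1 p \<beta> \<theta> (S \<union> {j}) j
     \<longleftrightarrow> mwork N N01 N1 p \<beta> \<theta> S j > 0" if "S \<in> F" "j \<in> N01" "j \<notin> S" for S j
    by (rule key1[OF finN partN disj p_nonneg p_stoch beta theta_pos F_sub[OF that(1)] that(2,3)])
  have K2: "bwork N N1 p \<beta> \<theta> S j > bwork N N1 p \<beta> \<theta> (S - {j}) j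
     \<longleftrightarrow> mwork N N01 N1 p \<beta> \<theta> S j > 0" if "S \<in> F" "j \<in> S" for S j
    by (rule key2[OF finN partN disj p_nonneg p_stoch beta theta_pos F_sub[OF that(1)] that(2)])
  show ?thesis
  proof
    assume L: "\<forall>S\<in>F. \<forall>j\<in>N01. mwork N N01 N1 p \<beta> \<theta> S j > 0"
    show "\<forall>S\<in>F. (\<forall>j\<in>N01 - S. bwork N N1 p \<beta> \<theta> S j < bwork N N1 p \<beta> \<theta> (S \<union> {j}) j)
                 \<and> (\<forall>j\<in>S. bwork N N1 p \<beta> \<theta> S j > bwork N N1 p \<beta> \<theta> (S - {j}) j)"
      using L K1 K2 F_sub by blast
  next
    assume R: "\<forall>S\<in>F. (\<forall>j\<in>N01 - S. bwork N N1 p \<beta> \<theta> S j < bwork N N1 p \<beta> \<theta> (S \<union> {j}) j)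
                 \<and> (\<forall>j\<in>S. bwork N N1 p \<beta> \<theta> S j > bwork N N1 p \<beta> \<theta> (S - {j}) j)"
    show "\<forall>S\<in>F. \<forall>j\<in>N01. mwork N N01 N1 p \<beta> \<theta> S j > 0"
    proof (intro ballI)
      fix S j assume S: "S \<in> F" and j: "j \<in> N01"
      show "mwork N N01 N1 p \<beta> \<theta> S j > 0"
      proof (cases "j \<in> S")
        case True then show ?thesis using K2[OF S True] R S by blast
      next
        case False then show ?thesis using K1[OF S j False] R S j by blast
      qed
    qed
  qed
qed

end
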